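(* Let $A\in\mathcal{C}^{\mathrm{clq}}$ be such that $\mathbf{A}:=\mathcal{G}(A)$ is $(n-1)$-pure. Let $\widehat{B}\in\mathcal{C}^{\mathrm{geo}}$ be such that $\mathbf{A}^{\mathrm{geo}}\le\widehat{B}$. Then there exists $B\in\mathcal{C}^{\mathrm{clq}}$ such that $A\le B$, $\mathcal{G}(B)$ is $(n-1)$-pure, and $(\mathcal{G}(B))^{\mathrm{geo}}=\widehat{B}$.
   Context: Fix a natural number $n$ and a symmetric irreflexive $n$-ary relation symbol $S$; substructures are induced. For an $\{S\}$-structure $A$, $K\subseteq A$ with $|K|\ge n$ is a clique if all $n$-element subsets of $K$ (as tuples of distinct elements) lie in $S^A$; maximal cliques are those not properly contained in another clique; $\mathcal{M}(A)$ is the set of maximal cliques. For finite $X$, $|X|_*=\max\{0,|X|-(n-1)\}$; for finite $A$, $\delta_s(A)=|A|-\sum_{K\in\mathcal{M}(A)}|K|_*$; for finite $B\subseteq A$, $\delta_s(A/B)=\delta_s(A)-\delta_s(B)$; $B\le A$ means $B$ is a substructure of $A$ and $\delta_s(X/B)\ge0$ for all finite $X$ with $B\subseteq X\subseteq A$. $\mathcal{C}^{\mathrm{clq}}_0$ is the class of finite $\{S\}$-structures in which distinct maximal cliques intersect in fewer than $n$ points; $\mathcal{C}^{\mathrm{clq}}$ is the class of $A\in\mathcal{C}^{\mathrm{clq}}_0$ with $\{a\}\le A$ for all $a\in A$. For an $\{S\}$-structure $A$ with $\{a\}\le A$ for all $a\in A$, the associated geometry $\mathcal{G}(A)$ is the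 geometry (finitary matroid with $\mathrm{cl}(\emptyset)=\emptyset$ and singletons closed) on the universe of $A$ with dimension function $d(X)=\inf\{\delta_s(Y):X\subseteq Y\subseteq A,\ Y\text{ finite}\}$ for finite $X$. A geometry is $m$-pure if $m$ is the maximal natural number such that every $m$-element subset is independent. For a geometry $\mathbf{A}$ on $A$, $\mathbf{A}^{\mathrm{geo}}$ is the $\{S\}$-structure on $A$ whose maximal cliques are exactly the sets $\mathrm{cl}_{\mathbf{A}}(C)$ with $C\in[A]^{n-1}$ and $\mathrm{cl}_{\mathbf{A}}(C)\ne C$. An $\{S\}$-structure $A$ is geometric if whenever $X\subseteq A$, $|X|\ge n$ and $\delta_s(X)<n$, there is a unique $K\in\mathcal{M}(A)$ with $X\subseteq K$; $\mathcal{C}^{\mathrm{geo}}$ is the class of finite geometric $\{S\}$-structures. *)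

theory Defs
  imports Main
begin

text \<open>An {S}-structure for a symmetric irreflexive n-ary relation symbol S is encoded
  as a pair (universe, S) where S is the set of n-element subsets whose (distinct-element)
  enumerations lie in the relation.\<close>

type_synonym 'a struc = "'a set \<times> 'a set set"

definition univ :: "'a struc \<Rightarrow> 'a set" where "univ A = fst A"
definition rel :: "'a struc \<Rightarrow> 'a set set" where "rel A = snd A"

definition wf_struc :: "nat \<Rightarrow> 'a struc \<Rightarrow> bool" where
  "wf_struc n A \<longleftrightarrow> (\<forall>K\<in>rel A. K \<subseteq> univ A \<and> finite K \<and> card K = n)"

definition restr :: "'a struc \<Rightarrow> 'a set \<Rightarrow> 'a struc" where
  "restr A X = (X, {K \<in> rel A. K \<subseteq> X})"

definition substruc :: "'a struc \<Rightarrow> 'a struc \<Rightarrow> bool" where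
  "substruc B A \<longleftrightarrow> univ B \<subseteq> univ A \<and> rel B = {K \<in> rel A. K \<subseteq> univ B}"

definition clique :: "nat \<Rightarrow> 'a struc \<Rightarrow> 'a set \<Rightarrow> bool" where
  "clique n A K \<longleftrightarrow> K \<subseteq> univ A
     \<and> (\<exists>F \<subseteq> K. finite F \<and> card F = n)
     \<and> (\<forall>F \<subseteq> K. finite F \<and> card F = n \<longrightarrow> F \<in> rel A)"

definition maxcliques :: "nat \<Rightarrow> 'a struc \<Rightarrow> 'a set set" where
  "maxcliques n A = {K. clique n A K \<and> (\<forall>K'. clique n A K' \<and> K \<subseteq> K' \<longrightarrow> K' = K)}"

text \<open>|X|_* = max 0 (|X| - (n-1)), via truncated subtraction on nat.\<close>
definition card_star :: "nat \<Rightarrow> 'a set \<Rightarrow> nat" where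
  "card_star n X = card X - (n - 1)"

definition delta :: "nat \<Rightarrow> 'a struc \<Rightarrow> int" where
  "delta n A = int (card (univ A)) - (\<Sum>K\<in>maxcliques n A. int (card_star n K))"

text \<open>B \<le> A (self-sufficient embedding), for finite B.\<close>
definition strong :: "nat \<Rightarrow> 'a struc \<Rightarrow> 'a struc \<Rightarrow> bool" where
  "strong n B A \<longleftrightarrow> substruc B A \<and> finite (univ B) \<and>
     (\<forall>X. finite X \<and> univ B \<subseteq> X \<and> X \<subseteq> univ A \<longrightarrow>
        delta n (restr A X) - delta n (restr A (univ B)) \<ge> 0)"

definition C_clq0 :: "nat \<Rightarrow> 'a struc \<Rightarrow> bool" where
  "C_clq0 n A \<longleftrightarrow> wf_struc n A \<and> finite (univ A) \<and>
     (\<forall>K1\<in>maxcliques n A. \<forall>K2\<in>maxcliques n A. K1 \<noteq> K2 \<longrightarrow> card (K1 \<inter> K2) < n)"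

definition C_clq :: "nat \<Rightarrow> 'a struc \<Rightarrow> bool" where
  "C_clq n A \<longleftrightarrow> C_clq0 n A \<and> (\<forall>a\<in>univ A. strong n (restr A {a}) A)"

text \<open>Dimension function of the associated geometry G(A), on finite X.\<close>
definition gdim :: "nat \<Rightarrow> 'a struc \<Rightarrow> 'a set \<Rightarrow> int" where
  "gdim n A X = Inf {delta n (restr A Y) | Y. finite Y \<and> X \<subseteq> Y \<and> Y \<subseteq> univ A}"

text \<open>Closure operator of G(A) on finite sets (matroid closure from the dimension function).\<close>
definition gcl :: "nat \<Rightarrow> 'a struc \<Rightarrow> 'a set \<Rightarrow> 'a set" where
  "gcl n A X = {a \<in> univ A. gdim n A (insert a X) = gdim n A X}"

definition gindep :: "nat \<Rightarrow> 'a struc \<Rightarrow> 'a set \<Rightarrow> bool" where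
  "gindep n A X \<longleftrightarrow> finite X \<and> gdim n A X = int (card X)"

definition pure :: "nat \<Rightarrow> 'a struc \<Rightarrow> nat \<Rightarrow> bool" where
  "pure n A m \<longleftrightarrow>
     (\<forall>X\<subseteq>univ A. finite X \<and> card X = m \<longrightarrow> gindep n A X) \<and>
     (\<exists>X\<subseteq>univ A. finite X \<and> card X = m + 1 \<and> \<not> gindep n A X)"

text \<open>The {S}-structure of a geometry (universe U, closure cl): its maximal cliques are the
  sets cl(C), C an (n-1)-subset with cl(C) \<noteq> C; S consists of the n-subsets of those sets.\<close>
definition geo_of :: "nat \<Rightarrow> 'a set \<Rightarrow> ('a set \<Rightarrow> 'a set) \<Rightarrow> 'a struc" where
  "geo_of n U cl = (U, {K. K \<subseteq> U \<and> finite K \<and> card K = n \<and>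
       (\<exists>C\<subseteq>U. finite C \<and> card C = n - 1 \<and> cl C \<noteq> C \<and> K \<subseteq> cl C)})"

definition Ggeo :: "nat \<Rightarrow> 'a struc \<Rightarrow> 'a struc" where
  "Ggeo n A = geo_of n (univ A) (gcl n A)"

definition geometric :: "nat \<Rightarrow> 'a struc \<Rightarrow> bool" where
  "geometric n A \<longleftrightarrow> (\<forall>X\<subseteq>univ A. finite X \<and> card X \<ge> n \<and> delta n (restr A X) < int n
      \<longrightarrow> (\<exists>!K. K \<in> maxcliques n A \<and> X \<subseteq> K))"

definition C_geo :: "nat \<Rightarrow> 'a struc \<Rightarrow> bool" where
  "C_geo n A \<longleftrightarrow> wf_struc n A \<and> finite (univ A) \<and> geometric n A"

end

theory Submission
  imports Defs
begin


definition lin :: "nat \<Rightarrow> 'a struc \<Rightarrow> bool" where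
  "lin n S \<longleftrightarrow> finite (univ S) \<and>
     (\<forall>K1\<in>maxcliques n S. \<forall>K2\<in>maxcliques n S. K1 \<noteq> K2 \<longrightarrow> card (K1 \<inter> K2) < n)"

lemma univ_restr[simp]: "univ (restr S Y) = Y" by (simp add: restr_def univ_def)
lemma rel_restr[simp]: "rel (restr S Y) = {K \<in> rel S. K \<subseteq> Y}" by (simp add: restr_def rel_def)

lemma clique_restr:
  assumes "Y \<subseteq> univ S"
  shows "clique n (restr S Y) Q \<longleftrightarrow> clique n S Q \<and> Q \<subseteq> Y"
  using assms unfolding clique_def by auto

lemma clique_max:
  assumes "finite (univ S)" "clique n S Q"
  shows "\<exists>K\<in>maxcliques n S. Q \<subseteq> K"
proof -
  let ?F = "{K. clique n S K \<and> Q \<subseteq> K}"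
  have "?F \<subseteq> Pow (univ S)" by (auto simp: clique_def)
  hence fin: "finite ?F" using assms(1) by (meson finite_Pow_iff finite_subset)
  have "Q \<in> ?F" using assms(2) by simp
  hence "?F \<noteq> {}" by blast
  from finite_has_maximal[OF fin this] obtain K where K: "K \<in> ?F"
    and mx: "\<forall>b\<in>?F. K \<le> b \<longrightarrow> K = b" by blast
  have "K \<in> maxcliques n S" unfolding maxcliques_def using K mx by auto
  thus ?thesis using K by auto
qed

lemma maxcl_clique: "K \<in> maxcliques n S \<Longrightarrow> clique n S K"
  by (simp add: maxcliques_def)

lemma clique_card:
  assumes "clique n S K" "finite (univ S)"
  shows "finite K" "card K \<ge> n" "K \<subseteq> univ S"
proof -
  show f: "finite K" "K \<subseteq> univ S" using assms unfolding clique_def using rev_finite_subset by blast+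
  obtain F where "F \<subseteq> K" "card F = n" using assms(1) unfolding clique_def by blast
  thus "card K \<ge> n" using f card_mono by blast
qed

lemma clique_sub_rel:
  "clique n S K \<Longrightarrow> F \<subseteq> K \<Longrightarrow> finite F \<Longrightarrow> card F = n \<Longrightarrow> F \<in> rel S"
  by (simp add: clique_def)

lemma maxcl_restr:
  assumes "lin n S" "Y \<subseteq> univ S"
  shows "maxcliques n (restr S Y) = (\<lambda>K. K \<inter> Y) ` {K \<in> maxcliques n S. card (K \<inter> Y) \<ge> n}"
proof (intro set_eqI iffI)
  have fin: "finite (univ S)" using assms(1) lin_def by blast
  fix Q assume Q: "Q \<in> maxcliques n (restr S Y)"
  have cqr: "clique n (restr S Y) Q" using Q by (rule maxcl_clique)
  have cq: "clique n S Q" "Q \<subseteq> Y" using cqr clique_restr[OF assms(2)] by blast+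
  obtain K where K: "K \<in> maxcliques n S" "Q \<subseteq> K" using clique_max[OF fin cq(1)] by blast
  have cK: "clique n S K" using K(1) by (rule maxcl_clique)
  have cKY: "clique n S (K \<inter> Y)"
  proof -
    obtain F where "F \<subseteq> Q" "finite F" "card F = n" using cq(1) unfolding clique_def by blast
    moreover have "K \<inter> Y \<subseteq> univ S" using cK unfolding clique_def by blast
    moreover have "F \<subseteq> K \<inter> Y" using calculation(1) cq(2) K(2) by blast
    ultimately show ?thesis using cK unfolding clique_def by (metis inf.boundedE subset_trans)
  qed
  hence "clique n (restr S Y) (K \<inter> Y)" using clique_restr[OF assms(2)] by blast
  moreover have "Q \<subseteq> K \<inter> Y" using K(2) cq(2) by blast
  ultimately have "K \<inter> Y = Q" using Q unfolding maxcliques_def by blast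
  moreover have "card (K \<inter> Y) \<ge> n" using clique_card[OF cKY fin] by simp
  ultimately show "Q \<in> (\<lambda>K. K \<inter> Y) ` {K \<in> maxcliques n S. card (K \<inter> Y) \<ge> n}" using K(1) by blast
next
  have fin: "finite (univ S)" using assms(1) lin_def by blast
  fix Q assume "Q \<in> (\<lambda>K. K \<inter> Y) ` {K \<in> maxcliques n S. card (K \<inter> Y) \<ge> n}"
  then obtain K where K: "K \<in> maxcliques n S" "card (K \<inter> Y) \<ge> n" "Q = K \<inter> Y" by blast
  have cK: "clique n S K" using K(1) by (rule maxcl_clique)
  have fK: "finite K" using clique_card[OF cK fin] by simp
  have cQ: "clique n S Q"
  proof -
    obtain F where "F \<subseteq> K \<inter> Y" "card F = n" "finite F" using obtain_subset_with_card_n[OF K(2)] by blast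
    moreover have "K \<inter> Y \<subseteq> univ S" using cK unfolding clique_def by blast
    ultimately show ?thesis using K(3) cK unfolding clique_def by (metis inf.boundedE subset_trans)
  qed
  have "clique n (restr S Y) Q" using cQ K(3) clique_restr[OF assms(2)] by blast
  moreover have "Q' = Q" if "clique n (restr S Y) Q'" "Q \<subseteq> Q'" for Q'
  proof -
    have c': "clique n S Q'" "Q' \<subseteq> Y" using that(1) clique_restr[OF assms(2)] by blast+
    obtain K' where K': "K' \<in> maxcliques n S" "Q' \<subseteq> K'" using clique_max[OF fin c'(1)] by blast
    have "K \<inter> Y \<subseteq> K \<inter> K'" using K(3) that(2) K'(2) by blast
    hence "card (K \<inter> Y) \<le> card (K \<inter> K')" using fK by (intro card_mono) auto
    hence "card (K \<inter> K') \<ge> n" using K(2) by simp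
    hence "K = K'" using assms(1) K(1) K'(1) unfolding lin_def by fastforce
    thus ?thesis using K' c' K(3) that(2) by blast
  qed
  ultimately show "Q \<in> maxcliques n (restr S Y)" unfolding maxcliques_def by blast
qed

lemma finite_maxcl: "finite (univ S) \<Longrightarrow> finite (maxcliques n S)"
proof -
  assume f: "finite (univ S)"
  have "maxcliques n S \<subseteq> Pow (univ S)" by (auto simp: maxcliques_def clique_def)
  thus ?thesis using f by (meson finite_Pow_iff rev_finite_subset)
qed

lemma cs_zero: "card X < n \<Longrightarrow> card_star n X = 0"
  by (simp add: card_star_def)

lemma delta_formula:
  assumes "lin n S" "Y \<subseteq> univ S"
  shows "delta n (restr S Y) = int (card Y) - (\<Sum>K\<in>maxcliques n S. int (card_star n (K \<inter> Y)))"
proof -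
  have fin: "finite (univ S)" using assms(1) lin_def by blast
  let ?M = "{K \<in> maxcliques n S. card (K \<inter> Y) \<ge> n}"
  have inj: "inj_on (\<lambda>K. K \<inter> Y) ?M"
  proof (rule inj_onI)
    fix K K' assume a: "K \<in> ?M" "K' \<in> ?M" "K \<inter> Y = K' \<inter> Y"
    have "K \<inter> Y \<subseteq> K \<inter> K'" using a(3) by blast
    moreover have "finite K" using clique_card[OF maxcl_clique fin] a(1) by blast
    ultimately have "card (K \<inter> Y) \<le> card (K \<inter> K')" by (intro card_mono) auto
    hence "card (K \<inter> K') \<ge> n" using a(1) by simp
    thus "K = K'" using assms(1) a unfolding lin_def by fastforce
  qed
  have "(\<Sum>K\<in>maxcliques n (restr S Y). int (card_star n K)) = (\<Sum>K\<in>?M. int (card_star n (K \<inter> Y)))"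
    unfolding maxcl_restr[OF assms] using sum.reindex[OF inj] by simp
  also have "\<dots> = (\<Sum>K\<in>maxcliques n S. int (card_star n (K \<inter> Y)))"
  proof (rule sum.mono_neutral_left)
    show "finite (maxcliques n S)" using finite_maxcl[OF fin] .
    show "?M \<subseteq> maxcliques n S" by blast
    show "\<forall>i\<in>maxcliques n S - ?M. int (card_star n (i \<inter> Y)) = 0"
      by (auto simp: card_star_def)
  qed
  finally show ?thesis unfolding delta_def by simp
qed

lemma cs_supermod_aux:
  fixes p q r s m :: nat
  assumes "s + r = p + q" "r \<le> p" "r \<le> q"
  shows "int (p - m) + int (q - m) \<le> int (s - m) + int (r - m)"
  using assms by linarith

lemma cs_supermod:
  assumes "finite K"
  shows "int (card_star n (K \<inter> Y)) + int (card_star n (K \<inter> Y')) \<le>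
         int (card_star n (K \<inter> (Y \<union> Y'))) + int (card_star n (K \<inter> (Y \<inter> Y')))"
proof -
  have e: "card (K \<inter> (Y \<union> Y')) + card (K \<inter> (Y \<inter> Y')) = card (K \<inter> Y) + card (K \<inter> Y')"
  proof -
    have "card (K \<inter> Y) + card (K \<inter> Y') = card ((K \<inter> Y) \<union> (K \<inter> Y')) + card ((K \<inter> Y) \<inter> (K \<inter> Y'))"
      by (rule card_Un_Int) (use assms in auto)
    moreover have "(K \<inter> Y) \<union> (K \<inter> Y') = K \<inter> (Y \<union> Y')" "(K \<inter> Y) \<inter> (K \<inter> Y') = K \<inter> (Y \<inter> Y')" by blast+
    ultimately show ?thesis by simp
  qed
  have "card (K \<inter> (Y \<inter> Y')) \<le> card (K \<inter> Y)" "card (K \<inter> (Y \<inter> Y')) \<le> card (K \<inter> Y')"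
    using assms by (auto intro: card_mono)
  thus ?thesis unfolding card_star_def using cs_supermod_aux[OF e] by blast
qed

lemma delta_submod:
  assumes "lin n S" "Y \<subseteq> univ S" "Y' \<subseteq> univ S"
  shows "delta n (restr S (Y \<union> Y')) + delta n (restr S (Y \<inter> Y')) \<le> delta n (restr S Y) + delta n (restr S Y')"
proof -
  have fin: "finite (univ S)" using assms(1) lin_def by blast
  have fY: "finite Y" "finite Y'" using assms fin finite_subset by blast+
  have c: "int (card (Y \<union> Y')) + int (card (Y \<inter> Y')) = int (card Y) + int (card Y')"
    using card_Un_Int[OF fY] by linarith
  have s: "(\<Sum>K\<in>maxcliques n S. int (card_star n (K \<inter> Y))) + (\<Sum>K\<in>maxcliques n S. int (card_star n (K \<inter> Y')))
     \<le> (\<Sum>K\<in>maxcliques n S. int (card_star n (K \<inter> (Y \<union> Y')))) + (\<Sum>K\<in>maxcliques n S. int (card_star n (K \<inter> (Y \<inter> Y'))))"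
    unfolding sum.distrib[symmetric]
  proof (rule sum_mono)
    fix K assume "K \<in> maxcliques n S"
    hence "finite K" using clique_card[OF maxcl_clique fin] by blast
    thus "int (card_star n (K \<inter> Y)) + int (card_star n (K \<inter> Y')) \<le>
         int (card_star n (K \<inter> (Y \<union> Y'))) + int (card_star n (K \<inter> (Y \<inter> Y')))" by (rule cs_supermod)
  qed
  have u: "Y \<union> Y' \<subseteq> univ S" "Y \<inter> Y' \<subseteq> univ S" using assms by auto
  show ?thesis unfolding delta_formula[OF assms(1) assms(2)] delta_formula[OF assms(1) assms(3)]
      delta_formula[OF assms(1) u(1)] delta_formula[OF assms(1) u(2)]
    using c s by linarith
qed

lemma delta_le_card:
  assumes "lin n S" "Y \<subseteq> univ S"
  shows "delta n (restr S Y) \<le> int (card Y)"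
  unfolding delta_formula[OF assms] by (simp add: sum_nonneg)

lemma delta_small:
  assumes "lin n S" "Y \<subseteq> univ S" "card Y < n"
  shows "delta n (restr S Y) = int (card Y)"
proof -
  have fin: "finite (univ S)" using assms(1) lin_def by blast
  have fY: "finite Y" using assms fin finite_subset by blast
  have "\<forall>K\<in>maxcliques n S. card_star n (K \<inter> Y) = 0"
  proof
    fix K assume "K \<in> maxcliques n S"
    have "card (K \<inter> Y) \<le> card Y" using fY by (intro card_mono) auto
    thus "card_star n (K \<inter> Y) = 0" using assms(3) by (intro cs_zero) simp
  qed
  thus ?thesis unfolding delta_formula[OF assms(1,2)] by simp
qed

lemma delta_in_clique:
  assumes "lin n S" "K \<in> maxcliques n S" "Y \<subseteq> K" "card Y \<ge> n - 1" "n \<ge> 1"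
  shows "delta n (restr S Y) = int n - 1"
proof -
  have fin: "finite (univ S)" using assms(1) lin_def by blast
  have cK: "clique n S K" using assms(2) by (rule maxcl_clique)
  have fK: "finite K" and KU: "K \<subseteq> univ S" using clique_card[OF cK fin] by auto
  have YU: "Y \<subseteq> univ S" using assms(3) KU by blast
  have fY: "finite Y" using assms(3) fK finite_subset by blast
  have z: "\<forall>K'\<in>maxcliques n S - {K}. int (card_star n (K' \<inter> Y)) = 0"
  proof
    fix K' assume K': "K' \<in> maxcliques n S - {K}"
    have "card (K' \<inter> K) < n" using assms(1,2) K' unfolding lin_def by auto
    moreover have "card (K' \<inter> Y) \<le> card (K' \<inter> K)" using fK assms(3) by (intro card_mono) auto
    ultimately have "card (K' \<inter> Y) < n" by linarith
    thus "int (card_star n (K' \<inter> Y)) = 0" by (simp add: cs_zero)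
  qed
  have "(\<Sum>K'\<in>maxcliques n S. int (card_star n (K' \<inter> Y))) = int (card_star n (K \<inter> Y))
        + (\<Sum>K'\<in>maxcliques n S - {K}. int (card_star n (K' \<inter> Y)))"
    using sum.remove[OF finite_maxcl[OF fin] assms(2)] by blast
  also have "\<dots> = int (card_star n Y)" using z assms(3) by (simp add: Int_absorb1)
  finally show ?thesis unfolding delta_formula[OF assms(1) YU] card_star_def using assms(4,5) by simp
qed

lemma gdim_set_fin:
  assumes "finite (univ S)"
  shows "finite {delta n (restr S Y) | Y. finite Y \<and> X \<subseteq> Y \<and> Y \<subseteq> univ S}"
proof -
  have "{delta n (restr S Y) | Y. finite Y \<and> X \<subseteq> Y \<and> Y \<subseteq> univ S} \<subseteq> (\<lambda>Y. delta n (restr S Y)) ` Pow (univ S)"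
    by blast
  thus ?thesis using assms by (meson finite_Pow_iff finite_imageI finite_subset)
qed

lemma gdim_le:
  assumes "finite (univ S)" "X \<subseteq> Y" "Y \<subseteq> univ S"
  shows "gdim n S X \<le> delta n (restr S Y)"
  unfolding gdim_def
proof (rule cInf_lower)
  show "delta n (restr S Y) \<in> {delta n (restr S Y) | Y. finite Y \<and> X \<subseteq> Y \<and> Y \<subseteq> univ S}"
    using assms finite_subset by blast
  show "bdd_below {delta n (restr S Y) | Y. finite Y \<and> X \<subseteq> Y \<and> Y \<subseteq> univ S}"
    using gdim_set_fin[OF assms(1)] by (rule bdd_below_finite)
qed

lemma gdim_attain:
  assumes "finite (univ S)" "X \<subseteq> univ S"
  shows "\<exists>Y. X \<subseteq> Y \<and> Y \<subseteq> univ S \<and> gdim n S X = delta n (restr S Y)"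
proof -
  let ?G = "{delta n (restr S Y) | Y. finite Y \<and> X \<subseteq> Y \<and> Y \<subseteq> univ S}"
  have ne: "?G \<noteq> {}" using assms by blast
  have "Inf ?G = Min ?G" using cInf_eq_Min[OF gdim_set_fin[OF assms(1)] ne] .
  moreover have "Min ?G \<in> ?G" using Min_in[OF gdim_set_fin[OF assms(1)] ne] .
  ultimately show ?thesis unfolding gdim_def by auto
qed

lemma gdim_ge:
  assumes "finite (univ S)" "X \<subseteq> univ S" "\<And>Y. X \<subseteq> Y \<Longrightarrow> Y \<subseteq> univ S \<Longrightarrow> c \<le> delta n (restr S Y)"
  shows "c \<le> gdim n S X"
  using gdim_attain[OF assms(1,2)] assms(3) by metis

lemma gdim_mono:
  assumes "finite (univ S)" "X \<subseteq> X'" "X' \<subseteq> univ S"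
  shows "gdim n S X \<le> gdim n S X'"
proof -
  obtain Y where "X' \<subseteq> Y" "Y \<subseteq> univ S" "gdim n S X' = delta n (restr S Y)"
    using gdim_attain[OF assms(1,3)] by blast
  thus ?thesis using gdim_le[OF assms(1)] assms(2) by (metis order_trans)
qed

lemma gdim_submod:
  assumes "lin n S" "X \<subseteq> univ S" "X' \<subseteq> univ S"
  shows "gdim n S (X \<union> X') + gdim n S (X \<inter> X') \<le> gdim n S X + gdim n S X'"
proof -
  have fin: "finite (univ S)" using assms(1) lin_def by blast
  obtain Y where Y: "X \<subseteq> Y" "Y \<subseteq> univ S" "gdim n S X = delta n (restr S Y)"
    using gdim_attain[OF fin assms(2)] by blast
  obtain Y' where Y': "X' \<subseteq> Y'" "Y' \<subseteq> univ S" "gdim n S X' = delta n (restr S Y')"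
    using gdim_attain[OF fin assms(3)] by blast
  have "gdim n S (X \<union> X') \<le> delta n (restr S (Y \<union> Y'))" using Y Y' by (intro gdim_le[OF fin]) auto
  moreover have "gdim n S (X \<inter> X') \<le> delta n (restr S (Y \<inter> Y'))" using Y Y' by (intro gdim_le[OF fin]) auto
  ultimately show ?thesis using delta_submod[OF assms(1) Y(2) Y'(2)] Y(3) Y'(3) by linarith
qed

lemma gdim_cl:
  assumes "lin n S" "C \<subseteq> univ S" "finite Z" "Z \<subseteq> gcl n S C"
  shows "gdim n S (C \<union> Z) = gdim n S C"
  using assms(3,4)
proof (induction Z rule: finite_induct)
  case empty thus ?case by simp
next
  case (insert z Z)
  have fin: "finite (univ S)" using assms(1) lin_def by blast
  have gU: "gcl n S C \<subseteq> univ S" unfolding gcl_def by blast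
  have IH: "gdim n S (C \<union> Z) = gdim n S C" using insert by blast
  have zc: "gdim n S (insert z C) = gdim n S C" using insert(4) unfolding gcl_def by blast
  have U1: "C \<union> Z \<subseteq> univ S" "insert z C \<subseteq> univ S" using insert(4) gU assms(2) by auto
  have eqs: "(C \<union> Z) \<union> insert z C = C \<union> insert z Z" by blast
  have "gdim n S (C \<union> insert z Z) + gdim n S ((C \<union> Z) \<inter> insert z C) \<le> gdim n S (C \<union> Z) + gdim n S (insert z C)"
    using gdim_submod[OF assms(1) U1] unfolding eqs .
  moreover have "gdim n S C \<le> gdim n S ((C \<union> Z) \<inter> insert z C)"
    using U1 by (intro gdim_mono[OF fin]) auto
  moreover have "gdim n S C \<le> gdim n S (C \<union> insert z Z)"
    using U1 by (intro gdim_mono[OF fin]) auto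
  ultimately show ?case using IH zc by linarith
qed

lemma maxcl_family:
  assumes fin: "finite (univ S)"
   and cl: "\<forall>F\<in>FF. clique n S F"
   and cov: "\<forall>Q. clique n S Q \<longrightarrow> (\<exists>F\<in>FF. Q \<subseteq> F)"
   and int: "\<forall>F\<in>FF. \<forall>F'\<in>FF. F \<noteq> F' \<longrightarrow> card (F \<inter> F') < n"
  shows "maxcliques n S = FF"
proof (intro set_eqI iffI)
  fix K assume K: "K \<in> maxcliques n S"
  then obtain F where F: "F \<in> FF" "K \<subseteq> F" using cov maxcl_clique by blast
  hence "F = K" using K cl unfolding maxcliques_def by blast
  thus "K \<in> FF" using F by simp
next
  fix F assume F: "F \<in> FF"
  have cF: "clique n S F" using F cl by blast
  have fF: "finite F" "card F \<ge> n" using clique_card[OF cF fin] by auto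
  have "K' = F" if h: "clique n S K'" "F \<subseteq> K'" for K'
  proof -
    obtain F' where F': "F' \<in> FF" "K' \<subseteq> F'" using cov h(1) by blast
    have "F \<inter> F' = F" using h(2) F'(2) by blast
    hence "F = F'" using int F F'(1) fF(2) by fastforce
    thus ?thesis using h(2) F'(2) by blast
  qed
  thus "F \<in> maxcliques n S" unfolding maxcliques_def using cF by blast
qed

lemma lin_eq:
  assumes "lin n S" "K \<in> maxcliques n S" "K' \<in> maxcliques n S" "Z \<subseteq> K" "Z \<subseteq> K'" "n \<le> card Z"
  shows "K = K'"
proof (rule ccontr)
  assume ne: "K \<noteq> K'"
  have fin: "finite (univ S)" using assms(1) lin_def by blast
  have "finite K" using clique_card[OF maxcl_clique[OF assms(2)] fin] by blast
  hence "card Z \<le> card (K \<inter> K')" using assms(4,5) by (intro card_mono) auto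
  moreover have "card (K \<inter> K') < n" using assms(1,2,3) ne unfolding lin_def by blast
  ultimately show False using assms(6) by linarith
qed



locale cstr =
  fixes n :: nat and A Bh :: "'a struc"
  assumes n2: "n \<ge> 2"
    and clqA: "C_clq n A"
    and pureA: "pure n A (n - 1)"
    and geoB: "C_geo n Bh"
    and strB: "strong n (Ggeo n A) Bh"
begin

abbreviation "UA \<equiv> univ A"
abbreviation "U \<equiv> univ Bh"
abbreviation "MA \<equiv> maxcliques n A"
abbreviation "MB \<equiv> maxcliques n Bh"

lemma finUA: "finite UA" using clqA unfolding C_clq_def C_clq0_def by blast
lemma finU: "finite U" using geoB unfolding C_geo_def by blast
lemma wfA: "wf_struc n A" using clqA unfolding C_clq_def C_clq0_def by blast
lemma wfBh: "wf_struc n Bh" using geoB unfolding C_geo_def by blast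
lemma linA: "lin n A" using clqA unfolding C_clq_def C_clq0_def lin_def by blast
lemma geom: "geometric n Bh" using geoB unfolding C_geo_def by blast

lemma univ_Ggeo: "univ (Ggeo n A) = UA" by (simp add: Ggeo_def geo_of_def univ_def)
lemma rel_Ggeo: "rel (Ggeo n A) = {K. K \<subseteq> UA \<and> finite K \<and> card K = n \<and>
       (\<exists>C\<subseteq>UA. finite C \<and> card C = n - 1 \<and> gcl n A C \<noteq> C \<and> K \<subseteq> gcl n A C)}"
  by (simp add: Ggeo_def geo_of_def rel_def univ_def)

lemma UA_sub: "UA \<subseteq> U" using strB univ_Ggeo unfolding strong_def substruc_def by simp
lemma relGgeo_eq: "rel (Ggeo n A) = {K \<in> rel Bh. K \<subseteq> UA}"
  using strB univ_Ggeo unfolding strong_def substruc_def by simp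
lemma strB_cond: "finite X \<Longrightarrow> UA \<subseteq> X \<Longrightarrow> X \<subseteq> U \<Longrightarrow> delta n (restr Bh UA) \<le> delta n (restr Bh X)"
  using strB univ_Ggeo unfolding strong_def by force

lemma geomD:
  assumes "X \<subseteq> U" "finite X" "n \<le> card X" "delta n (restr Bh X) < int n"
  shows "\<exists>K. K \<in> MB \<and> X \<subseteq> K \<and> (\<forall>K'. K' \<in> MB \<and> X \<subseteq> K' \<longrightarrow> K' = K)"
proof -
  have "\<exists>!K. K \<in> MB \<and> X \<subseteq> K"
    by (rule geom[unfolded geometric_def, rule_format, OF assms(1)]) (use assms in simp)
  thus ?thesis by (rule ex1E) blast
qed

lemma n1: "n - 1 + 1 = n" using n2 by simp

lemma single_clique_delta:
  assumes "X \<subseteq> U" "finite X" "card X = n" "X \<in> rel Bh"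
  shows "delta n (restr Bh X) = int n - 1"
proof -
  have "F \<in> rel Bh" if "F \<subseteq> X" "card F = n" for F
    using that assms card_subset_eq[OF assms(2)] by metis
  hence cX: "clique n (restr Bh X) X" using assms unfolding clique_def by auto
  have "maxcliques n (restr Bh X) = {X}"
  proof (intro set_eqI iffI)
    fix Q assume "Q \<in> maxcliques n (restr Bh X)"
    hence c: "clique n (restr Bh X) Q" by (rule maxcl_clique)
    hence "Q \<subseteq> X" unfolding clique_def by simp
    moreover obtain F where "F \<subseteq> Q" "finite F" "card F = n" using c unfolding clique_def by blast
    ultimately have "F = X" using assms(2,3) by (metis card_subset_eq subset_trans)
    thus "Q \<in> {X}" using \<open>Q \<subseteq> X\<close> \<open>F \<subseteq> Q\<close> by blast
  next
    fix Q assume "Q \<in> {X}"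
    hence "Q = X" by simp
    moreover have "K' = X" if "clique n (restr Bh X) K'" "X \<subseteq> K'" for K'
      using that unfolding clique_def by auto
    ultimately show "Q \<in> maxcliques n (restr Bh X)" using cX unfolding maxcliques_def by blast
  qed
  thus ?thesis unfolding delta_def card_star_def using assms(3) n2 by simp
qed

lemma linBh: "lin n Bh"
proof -
  have "card (K1 \<inter> K2) < n" if K: "K1 \<in> MB" "K2 \<in> MB" "K1 \<noteq> K2" for K1 K2
  proof (rule ccontr)
    assume "\<not> card (K1 \<inter> K2) < n"
    hence "n \<le> card (K1 \<inter> K2)" by simp
    then obtain X where X: "X \<subseteq> K1 \<inter> K2" "card X = n" "finite X"
      by (rule obtain_subset_with_card_n)
    have c1: "clique n Bh K1" using K(1) by (rule maxcl_clique)
    have XU: "X \<subseteq> U" using X(1) c1 unfolding clique_def by blast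
    have "X \<subseteq> K1" using X(1) by blast
    hence "X \<in> rel Bh" by (rule clique_sub_rel[OF c1 _ X(3) X(2)])
    hence "delta n (restr Bh X) < int n" using single_clique_delta[OF XU X(3,2)] by simp
    moreover have "n \<le> card X" using X by simp
    ultimately obtain K where "K \<in> MB" "\<forall>K'. K' \<in> MB \<and> X \<subseteq> K' \<longrightarrow> K' = K"
      using geomD[OF XU X(3)] by blast
    moreover have "K1 \<in> MB \<and> X \<subseteq> K1" "K2 \<in> MB \<and> X \<subseteq> K2" using K X by auto
    ultimately show False using K(3) by blast
  qed
  thus ?thesis unfolding lin_def using finU by blast
qed

lemma pureA_delta:
  assumes "Z \<subseteq> UA" "card Z \<ge> n - 1"
  shows "delta n (restr A Z) \<ge> int n - 1"
proof -
  obtain W where W: "W \<subseteq> Z" "card W = n - 1" "finite W" using obtain_subset_with_card_n[OF assms(2)] by blast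
  have "gindep n A W" using pureA W assms(1) unfolding pure_def by blast
  hence "gdim n A W = int n - 1" using W n2 unfolding gindep_def by simp
  moreover have "gdim n A W \<le> delta n (restr A Z)" using gdim_le[OF finUA W(1) assms(1)] .
  ultimately show ?thesis by simp
qed

lemma gdimA_C:
  assumes "C \<subseteq> UA" "card C = n - 1"
  shows "gdim n A C = int n - 1"
proof -
  have "finite C" using assms finUA finite_subset by blast
  hence "gindep n A C" using pureA assms unfolding pure_def by blast
  thus ?thesis using assms n2 unfolding gindep_def by simp
qed

lemma MA_in_MB:
  assumes F: "F \<in> MA"
  shows "\<exists>K\<in>MB. F \<subseteq> K"
proof -
  have cF: "clique n A F" using F by (rule maxcl_clique)
  have fF: "finite F" "card F \<ge> n" "F \<subseteq> UA" using clique_card[OF cF finUA] by blast+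
  have dF: "delta n (restr A F) = int n - 1" using delta_in_clique[OF linA F subset_refl] fF n2 by simp
  have "S \<in> rel Bh" if S: "S \<subseteq> F" "finite S" "card S = n" for S
  proof -
    have "S \<noteq> {}" using S(3) n2 by auto
    then obtain s where s: "s \<in> S" by blast
    let ?C = "S - {s}"
    have Cc: "card ?C = n - 1" using S s by simp
    have CU: "?C \<subseteq> UA" using S fF by blast
    have gC: "gdim n A ?C = int n - 1" using gdimA_C[OF CU Cc] .
    have Fcl: "F \<subseteq> gcl n A ?C"
    proof
      fix x assume x: "x \<in> F"
      have "gdim n A ?C \<le> gdim n A (insert x ?C)" using x fF CU by (intro gdim_mono[OF finUA]) auto
      moreover have "gdim n A (insert x ?C) \<le> delta n (restr A F)" using x S fF by (intro gdim_le[OF finUA]) auto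
      ultimately have "gdim n A (insert x ?C) = gdim n A ?C" using gC dF by linarith
      moreover have "x \<in> UA" using x fF(3) by blast
      ultimately show "x \<in> gcl n A ?C" unfolding gcl_def by blast
    qed
    have "gcl n A ?C \<noteq> ?C" using Fcl s S by blast
    moreover have "finite ?C" using S(2) by simp
    moreover have "S \<subseteq> UA" using S(1) fF(3) by blast
    moreover have "S \<subseteq> gcl n A ?C" using S(1) Fcl by blast
    ultimately have "S \<in> rel (Ggeo n A)" unfolding rel_Ggeo using S(2,3) CU Cc by blast
    thus ?thesis unfolding relGgeo_eq by blast
  qed
  moreover obtain S0 where "S0 \<subseteq> F" "finite S0" "card S0 = n" using cF unfolding clique_def by blast
  moreover have "F \<subseteq> U" using fF(3) UA_sub by blast
  ultimately have "clique n Bh F" unfolding clique_def by blast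
  thus ?thesis using clique_max[OF finU] by blast
qed

lemma finMA: "finite MA" using finite_maxcl[OF finUA] .
lemma finMB: "finite MB" using finite_maxcl[OF finU] .

lemma MB_props:
  assumes "K \<in> MB"
  shows "finite K" "card K \<ge> n" "K \<subseteq> U" "clique n Bh K"
  using clique_card[OF maxcl_clique[OF assms] finU] maxcl_clique[OF assms] by blast+

lemma MA_props:
  assumes "F \<in> MA"
  shows "finite F" "card F \<ge> n" "F \<subseteq> UA" "clique n A F"
  using clique_card[OF maxcl_clique[OF assms] finUA] maxcl_clique[OF assms] by blast+

lemma relA_sub: "S \<in> rel A \<Longrightarrow> S \<subseteq> UA \<and> finite S \<and> card S = n"
  using wfA unfolding wf_struc_def by blast

lemma relBh_sub: "S \<in> rel Bh \<Longrightarrow> S \<subseteq> U \<and> finite S \<and> card S = n"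
  using wfBh unfolding wf_struc_def by blast

lemma E:
  assumes XA: "X \<subseteq> UA"
  shows "delta n (restr Bh X) \<le> delta n (restr A X)"
proof -
  define phi where "phi F = (SOME K. K \<in> MB \<and> F \<subseteq> K)" for F
  have phi: "phi F \<in> MB \<and> F \<subseteq> phi F" if "F \<in> MA" for F
  proof -
    have "\<exists>K. K \<in> MB \<and> F \<subseteq> K" using MA_in_MB[OF that] by blast
    thus ?thesis unfolding phi_def by (rule someI_ex)
  qed
  have XU: "X \<subseteq> U" using XA UA_sub by blast
  have fX: "finite X" using XA finUA finite_subset by blast
  let ?g = "\<lambda>F. int (card_star n (F \<inter> X))"
  have grp: "(\<Sum>K\<in>MB. sum ?g {F. F \<in> MA \<and> phi F = K}) = sum ?g MA"
    by (rule sum.group[OF finMA finMB]) (use phi in blast)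
  have per: "sum ?g {F. F \<in> MA \<and> phi F = K} \<le> int (card_star n (K \<inter> X))" if K: "K \<in> MB" for K
  proof -
    let ?XK = "K \<inter> X"
    have XKA: "?XK \<subseteq> UA" using XA by blast
    have fXK: "finite ?XK" using fX by simp
    have "sum ?g {F. F \<in> MA \<and> phi F = K} = (\<Sum>F\<in>{F. F \<in> MA \<and> phi F = K}. int (card_star n (F \<inter> ?XK)))"
    proof (rule sum.cong[OF refl])
      fix F assume "F \<in> {F. F \<in> MA \<and> phi F = K}"
      hence "F \<subseteq> K" using phi by blast
      hence "F \<inter> X = F \<inter> ?XK" by blast
      thus "?g F = int (card_star n (F \<inter> ?XK))" by simp
    qed
    also have "\<dots> \<le> (\<Sum>F\<in>MA. int (card_star n (F \<inter> ?XK)))"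
      by (rule sum_mono2[OF finMA]) auto
    finally have s1: "sum ?g {F. F \<in> MA \<and> phi F = K} \<le> (\<Sum>F\<in>MA. int (card_star n (F \<inter> ?XK)))" .
    show ?thesis
    proof (cases "card ?XK \<ge> n - 1")
      case True
      have "delta n (restr A ?XK) \<ge> int n - 1" using pureA_delta[OF XKA True] .
      moreover have "delta n (restr A ?XK) = int (card ?XK) - (\<Sum>F\<in>MA. int (card_star n (F \<inter> ?XK)))"
        using delta_formula[OF linA XKA] .
      moreover have "int (card_star n ?XK) = int (card ?XK) - (int n - 1)"
        using True n2 unfolding card_star_def by linarith
      ultimately show ?thesis using s1 by linarith
    next
      case False
      have "(\<Sum>F\<in>MA. int (card_star n (F \<inter> ?XK))) = 0"
      proof (rule sum.neutral, rule ballI)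
        fix F assume "F \<in> MA"
        have "card (F \<inter> ?XK) \<le> card ?XK" using fXK by (intro card_mono) auto
        hence "card (F \<inter> ?XK) - (n - 1) = 0" using False by linarith
        thus "int (card_star n (F \<inter> ?XK)) = 0" unfolding card_star_def by simp
      qed
      thus ?thesis using s1 by simp
    qed
  qed
  have "sum ?g MA \<le> (\<Sum>K\<in>MB. int (card_star n (K \<inter> X)))"
    unfolding grp[symmetric] by (rule sum_mono) (rule per)
  thus ?thesis unfolding delta_formula[OF linA XA] delta_formula[OF linBh XU] by linarith
qed

lemma Bh_int2:
  assumes K: "K \<in> MB" "K' \<in> MB" "K \<noteq> K'"
  shows "card (K \<inter> K') < n - 1"
proof (rule ccontr)
  assume "\<not> card (K \<inter> K') < n - 1"
  hence "n - 1 \<le> card (K \<inter> K')" by simp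
  then obtain C where C: "C \<subseteq> K \<inter> K'" "card C = n - 1" "finite C" by (rule obtain_subset_with_card_n)
  have nsub: "\<not> K \<subseteq> K'" if "K \<in> MB" "K' \<in> MB" "K \<noteq> K'" for K K'
  proof
    assume "K \<subseteq> K'"
    thus False using that maxcl_clique[OF that(2)] unfolding maxcliques_def by blast
  qed
  obtain k where k: "k \<in> K" "k \<notin> K'" using nsub[OF K] by blast
  obtain k' where k': "k' \<in> K'" "k' \<notin> K" using nsub[OF K(2,1)] K(3) by blast
  let ?X = "insert k (insert k' C)"
  have kC: "k \<notin> insert k' C" using k k' C by blast
  have k'C: "k' \<notin> C" using k' C by blast
  have cX: "card ?X = n + 1" using kC k'C C n2 by (simp add: card_insert_if)
  have fX: "finite ?X" using C by simp
  have XU: "?X \<subseteq> U" using C k k' MB_props(3)[OF K(1)] MB_props(3)[OF K(2)] by blast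
  have kn: "k \<notin> C" "k' \<notin> C" using k k' C by blast+
  have ck: "card (insert k C) = n" "card (insert k' C) = n" using kn C n2 by simp_all
  have c1: "card (K \<inter> ?X) \<ge> n"
  proof -
    have "insert k C \<subseteq> K \<inter> ?X" using k C by blast
    moreover note ck(1)
    ultimately show ?thesis using fX by (metis card_mono finite_Int)
  qed
  have c2: "card (K' \<inter> ?X) \<ge> n"
  proof -
    have "insert k' C \<subseteq> K' \<inter> ?X" using k' C by blast
    moreover note ck(2)
    ultimately show ?thesis using fX by (metis card_mono finite_Int)
  qed
  have "(\<Sum>K''\<in>{K, K'}. int (card_star n (K'' \<inter> ?X))) \<le> (\<Sum>K''\<in>MB. int (card_star n (K'' \<inter> ?X)))"
    by (rule sum_mono2[OF finMB]) (use K in auto)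
  moreover have "(\<Sum>K''\<in>{K, K'}. int (card_star n (K'' \<inter> ?X))) \<ge> 2"
    using K(3) c1 c2 n2 unfolding card_star_def by simp
  ultimately have "delta n (restr Bh ?X) < int n"
    unfolding delta_formula[OF linBh XU] using cX by linarith
  then obtain K0 where K0: "K0 \<in> MB" "?X \<subseteq> K0" using geomD[OF XU fX] cX by auto
  have "K = K0" by (rule lin_eq[OF linBh K(1) K0(1), of "insert k C"]) (use k C K0 ck in auto)
  moreover have "K' = K0" by (rule lin_eq[OF linBh K(2) K0(1), of "insert k' C"]) (use k' C K0 ck in auto)
  ultimately show False using K(3) by simp
qed

end



context cstr begin

definition NK where "NK = {K \<in> MB. \<not> K \<subseteq> UA}"
definition CK where "CK K = (SOME C. C \<subseteq> K \<inter> UA \<and> card C = min (n - 1) (card (K \<inter> UA)))"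
definition MK where "MK K = CK K \<union> (K - UA)"
definition relB where "relB = rel A \<union> {S. finite S \<and> card S = n \<and> (\<exists>K\<in>NK. S \<subseteq> MK K)}"
definition B where "B = (U, relB)"

lemma univB[simp]: "univ B = U" by (simp add: B_def univ_def)
lemma relB[simp]: "rel B = relB" by (simp add: B_def rel_def)

lemma NK_MB: "K \<in> NK \<Longrightarrow> K \<in> MB" by (simp add: NK_def)

lemma CK_props:
  assumes "K \<in> MB"
  shows "CK K \<subseteq> K \<inter> UA" "card (CK K) = min (n - 1) (card (K \<inter> UA))"
proof -
  have "min (n - 1) (card (K \<inter> UA)) \<le> card (K \<inter> UA)" by simp
  then obtain C where "C \<subseteq> K \<inter> UA" "card C = min (n - 1) (card (K \<inter> UA))"
    by (rule obtain_subset_with_card_n)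
  hence "\<exists>C. C \<subseteq> K \<inter> UA \<and> card C = min (n - 1) (card (K \<inter> UA))" by blast
  hence "CK K \<subseteq> K \<inter> UA \<and> card (CK K) = min (n - 1) (card (K \<inter> UA))"
    unfolding CK_def by (rule someI_ex)
  thus "CK K \<subseteq> K \<inter> UA" "card (CK K) = min (n - 1) (card (K \<inter> UA))" by blast+
qed

lemma CK_fin: "K \<in> MB \<Longrightarrow> finite (CK K)"
  using CK_props(1) MB_props(1) finite_subset by blast

lemma CK_le: "K \<in> MB \<Longrightarrow> card (CK K) \<le> n - 1"
  using CK_props(2) by simp

lemma CK_full:
  assumes "K \<in> MB" "card (K \<inter> UA) < n - 1"
  shows "CK K = K \<inter> UA"
proof -
  have "card (CK K) = card (K \<inter> UA)" using CK_props(2)[OF assms(1)] assms(2) by simp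
  thus ?thesis using CK_props(1)[OF assms(1)] MB_props(1)[OF assms(1)]
    by (metis card_subset_eq finite_Int)
qed

lemma MK_sub: "K \<in> MB \<Longrightarrow> MK K \<subseteq> K"
  using CK_props(1) unfolding MK_def by blast

lemma MK_UA: "K \<in> MB \<Longrightarrow> MK K \<inter> UA = CK K"
  using CK_props(1) unfolding MK_def by blast

lemma MK_fin: "K \<in> MB \<Longrightarrow> finite (MK K)"
  using MK_sub MB_props(1) finite_subset by blast

lemma NK_new: "K \<in> NK \<Longrightarrow> \<exists>e\<in>MK K. e \<notin> UA"
  unfolding NK_def MK_def by blast

lemma MK_card:
  assumes "K \<in> NK"
  shows "card (MK K) \<ge> n"
proof -
  have K: "K \<in> MB" using assms NK_MB by blast
  have fK: "finite K" using MB_props(1)[OF K] .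
  have disj: "CK K \<inter> (K - UA) = {}" using CK_props(1)[OF K] by blast
  have cMK: "card (MK K) = card (CK K) + card (K - UA)"
    unfolding MK_def by (rule card_Un_disjoint) (use CK_fin[OF K] fK disj in auto)
  show ?thesis
  proof (cases "card (K \<inter> UA) < n - 1")
    case True
    hence "MK K = K" using CK_full[OF K True] unfolding MK_def by blast
    thus ?thesis using MB_props(2)[OF K] by simp
  next
    case False
    hence "card (CK K) = n - 1" using CK_props(2)[OF K] by simp
    moreover have "K - UA \<noteq> {}" using assms unfolding NK_def by blast
    hence "card (K - UA) \<ge> 1" using fK by (simp add: Suc_le_eq card_gt_0_iff)
    ultimately show ?thesis using cMK n2 by linarith
  qed
qed

lemma MK_int:
  assumes "K \<in> NK" "K' \<in> NK" "K \<noteq> K'"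
  shows "card (MK K \<inter> MK K') < n - 1"
proof -
  have K: "K \<in> MB" "K' \<in> MB" using assms NK_MB by blast+
  have "card (MK K \<inter> MK K') \<le> card (K \<inter> K')"
    using MK_sub[OF K(1)] MK_sub[OF K(2)] MB_props(1)[OF K(1)] by (intro card_mono) auto
  thus ?thesis using Bh_int2[OF K assms(3)] by linarith
qed

lemma MK_inj: "inj_on MK NK"
proof (rule inj_onI)
  fix K K' assume a: "K \<in> NK" "K' \<in> NK" "MK K = MK K'"
  show "K = K'"
  proof (rule ccontr)
    assume "K \<noteq> K'"
    hence "card (MK K \<inter> MK K') < n - 1" using MK_int a by blast
    thus False using MK_card[OF a(1)] a(3) by simp
  qed
qed

lemma relB_restrA:
  assumes "Y \<subseteq> UA"
  shows "{S \<in> relB. S \<subseteq> Y} = {S \<in> rel A. S \<subseteq> Y}"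
proof -
  have "S \<in> rel A" if S: "finite S" "card S = n" "K \<in> NK" "S \<subseteq> MK K" "S \<subseteq> Y" for S K
  proof -
    have K: "K \<in> MB" using S(3) NK_MB by blast
    have "S \<subseteq> CK K" using S(4,5) assms MK_UA[OF K] by blast
    hence "card S \<le> card (CK K)" using CK_fin[OF K] by (rule card_mono[rotated])
    thus ?thesis using CK_le[OF K] S(2) n2 by linarith
  qed
  thus ?thesis unfolding relB_def by blast
qed

lemma restrB_A: "Y \<subseteq> UA \<Longrightarrow> restr B Y = restr A Y"
  using relB_restrA unfolding restr_def by (simp add: rel_def[symmetric])

lemma DB_A: "Y \<subseteq> UA \<Longrightarrow> delta n (restr B Y) = delta n (restr A Y)"
  using restrB_A by simp

lemma wfB: "wf_struc n B"
  unfolding wf_struc_def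
proof
  fix S assume "S \<in> rel B"
  hence "S \<in> rel A \<or> (finite S \<and> card S = n \<and> (\<exists>K\<in>NK. S \<subseteq> MK K))" unfolding relB relB_def by blast
  thus "S \<subseteq> univ B \<and> finite S \<and> card S = n"
  proof
    assume a: "S \<in> rel A" show ?thesis unfolding univB using relA_sub[OF a] UA_sub by (meson order_trans)
  next
    assume "finite S \<and> card S = n \<and> (\<exists>K\<in>NK. S \<subseteq> MK K)"
    then obtain K where "K \<in> NK" "S \<subseteq> MK K" "finite S" "card S = n" by blast
    moreover have "MK K \<subseteq> U" using MK_sub[OF NK_MB] MB_props(3)[OF NK_MB] calculation(1) by blast
    ultimately show ?thesis unfolding univB by blast
  qed
qed

lemma relB_memI: "K \<in> NK \<Longrightarrow> S \<subseteq> MK K \<Longrightarrow> finite S \<Longrightarrow> card S = n \<Longrightarrow> S \<in> relB"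
  unfolding relB_def by blast

lemma relB_cases:
  assumes "S \<in> relB" "\<not> S \<subseteq> UA"
  shows "\<exists>K\<in>NK. S \<subseteq> MK K"
proof -
  have "S \<notin> rel A" using assms(2) relA_sub by blast
  thus ?thesis using assms(1) unfolding relB_def by blast
qed

lemma clique_B_cov:
  assumes cQ: "clique n B Q"
  shows "\<exists>F\<in>MA \<union> MK ` NK. Q \<subseteq> F"
proof (cases "Q \<subseteq> UA")
  case True
  have "clique n A Q"
  proof -
    have "S \<in> rel A" if "S \<subseteq> Q" "finite S" "card S = n" for S
    proof -
      have "S \<in> relB" using cQ that unfolding clique_def by simp
      hence "S \<in> {S \<in> relB. S \<subseteq> UA}" using that True by blast
      thus ?thesis unfolding relB_restrA[OF subset_refl] by blast
    qed
    thus ?thesis using cQ True unfolding clique_def by blast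
  qed
  then obtain F where "F \<in> MA" "Q \<subseteq> F" using clique_max[OF finUA] by blast
  thus ?thesis by blast
next
  case False
  then obtain e where e: "e \<in> Q" "e \<notin> UA" by blast
  have fQ: "finite Q" "card Q \<ge> n" "Q \<subseteq> U" using clique_card[OF cQ] finU by auto
  have rQ: "S \<in> relB" if "S \<subseteq> Q" "finite S" "card S = n" for S
    using cQ that unfolding clique_def by simp
  have "card (Q - {e}) \<ge> n - 1" using fQ e by simp
  then obtain T where T: "T \<subseteq> Q - {e}" "card T = n - 1" "finite T" by (rule obtain_subset_with_card_n)
  let ?S = "insert e T"
  have eT: "e \<notin> T" using T by blast
  have cS: "card ?S = n" using eT T n2 by simp
  have "?S \<in> relB" using rQ[of ?S] T e cS by blast
  moreover have "\<not> ?S \<subseteq> UA" using e by blast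
  ultimately obtain K where K: "K \<in> NK" "?S \<subseteq> MK K" using relB_cases by blast
  have "Q \<subseteq> MK K"
  proof
    fix q assume q: "q \<in> Q"
    show "q \<in> MK K"
    proof (cases "q \<in> ?S")
      case True thus ?thesis using K by blast
    next
      case False
      have "T \<noteq> {}" using T n2 by auto
      then obtain s where s: "s \<in> T" by blast
      let ?R = "insert e (T - {s})"
      let ?S' = "insert q ?R"
      have cR: "card ?R = n - 1" using T s eT n2 by (simp add: card_insert_if)
      have qR: "q \<notin> ?R" using False by blast
      have cS': "card ?S' = n" using cR qR T n2 by simp
      have "?S' \<subseteq> Q" using T e q by blast
      hence "?S' \<in> relB" using rQ[of ?S'] cS' T by simp
      moreover have "\<not> ?S' \<subseteq> UA" using e by blast
      ultimately obtain K' where K': "K' \<in> NK" "?S' \<subseteq> MK K'" using relB_cases by blast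
      have "K' = K"
      proof (rule ccontr)
        assume "K' \<noteq> K"
        hence lt: "card (MK K' \<inter> MK K) < n - 1" using MK_int K'(1) K(1) by blast
        have "?R \<subseteq> MK K' \<inter> MK K" using K K' s by blast
        hence "card ?R \<le> card (MK K' \<inter> MK K)"
          using MK_fin[OF NK_MB[OF K(1)]] by (intro card_mono) auto
        thus False using lt cR by linarith
      qed
      thus ?thesis using K' by blast
    qed
  qed
  thus ?thesis using K by blast
qed

lemma fam_int: "\<forall>F\<in>MA \<union> MK ` NK. \<forall>F'\<in>MA \<union> MK ` NK. F \<noteq> F' \<longrightarrow> card (F \<inter> F') < n"
proof (intro ballI impI)
  fix F F' assume F: "F \<in> MA \<union> MK ` NK" and F': "F' \<in> MA \<union> MK ` NK" and ne: "F \<noteq> F'"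
  have AM: "card (G \<inter> MK K) < n" if G: "G \<in> MA" and K: "K \<in> NK" for G K
  proof -
    have KB: "K \<in> MB" using K NK_MB by blast
    have "G \<inter> MK K \<subseteq> CK K" using MA_props(3)[OF G] MK_UA[OF KB] by blast
    hence "card (G \<inter> MK K) \<le> card (CK K)" using CK_fin[OF KB] by (rule card_mono[rotated])
    thus ?thesis using CK_le[OF KB] n2 by linarith
  qed
  show "card (F \<inter> F') < n"
  proof (cases "F \<in> MA")
    case FA: True
    show ?thesis
    proof (cases "F' \<in> MA")
      case True
      thus ?thesis using FA ne clqA unfolding C_clq_def C_clq0_def by blast
    next
      case False
      then obtain K' where "K' \<in> NK" "F' = MK K'" using F' by blast
      thus ?thesis using AM[OF FA] by blast
    qed
  next
    case FN: False
    then obtain K where K: "K \<in> NK" "F = MK K" using F by blast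
    show ?thesis
    proof (cases "F' \<in> MA")
      case True
      thus ?thesis using AM[OF True K(1)] K(2) by (simp add: Int_commute)
    next
      case False
      then obtain K' where K': "K' \<in> NK" "F' = MK K'" using F' by blast
      have "K \<noteq> K'" using ne K K' by blast
      thus ?thesis using MK_int[OF K(1) K'(1)] K K' by simp
    qed
  qed
qed

lemma MB_B: "maxcliques n B = MA \<union> MK ` NK"
proof (rule maxcl_family)
  show "finite (univ B)" using finU by simp
  show "\<forall>F\<in>MA \<union> MK ` NK. clique n B F"
  proof
    fix F assume "F \<in> MA \<union> MK ` NK"
    thus "clique n B F"
    proof
      assume F: "F \<in> MA"
      have cF: "clique n A F" using MA_props(4)[OF F] .
      have "F \<subseteq> U" using MA_props(3)[OF F] UA_sub by blast
      moreover have "S \<in> relB" if "S \<subseteq> F" "finite S" "card S = n" for S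
        using cF that unfolding clique_def relB_def by blast
      moreover obtain S0 where "S0 \<subseteq> F" "finite S0" "card S0 = n" using cF unfolding clique_def by blast
      ultimately show ?thesis unfolding clique_def univB relB by blast
    next
      assume "F \<in> MK ` NK"
      then obtain K where K: "K \<in> NK" "F = MK K" by blast
      have KB: "K \<in> MB" using K(1) NK_MB by blast
      have "F \<subseteq> U" using K MK_sub[OF KB] MB_props(3)[OF KB] by blast
      moreover have "S \<in> relB" if "S \<subseteq> F" "finite S" "card S = n" for S
        using relB_memI[OF K(1)] that K(2) by blast
      moreover obtain S0 where "S0 \<subseteq> F" "card S0 = n" "finite S0"
        using obtain_subset_with_card_n[OF MK_card[OF K(1)]] K(2) by blast
      ultimately show ?thesis unfolding clique_def univB relB by blast
    qed
  qed
  show "\<forall>Q. clique n B Q \<longrightarrow> (\<exists>F\<in>MA \<union> MK ` NK. Q \<subseteq> F)" using clique_B_cov by blast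
  show "\<forall>F\<in>MA \<union> MK ` NK. \<forall>F'\<in>MA \<union> MK ` NK. F \<noteq> F' \<longrightarrow> card (F \<inter> F') < n" by (rule fam_int)
qed

lemma linB: "lin n B"
  unfolding lin_def
proof (intro conjI)
  show "finite (univ B)" using finU by simp
  note fam_int
  thus "\<forall>K1\<in>maxcliques n B. \<forall>K2\<in>maxcliques n B. K1 \<noteq> K2 \<longrightarrow> card (K1 \<inter> K2) < n"
    unfolding MB_B .
qed

lemma finNK: "finite NK" using finMB unfolding NK_def by simp

lemma DB_formula:
  assumes YU: "Y \<subseteq> U"
  shows "delta n (restr B Y) = int (card Y) - (\<Sum>F\<in>MA. int (card_star n (F \<inter> Y)))
          - (\<Sum>K\<in>NK. int (card_star n (MK K \<inter> Y)))"
proof -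
  have disj: "MA \<inter> MK ` NK = {}"
  proof -
    have "MK K \<notin> MA" if "K \<in> NK" for K
      using NK_new[OF that] MA_props(3) by blast
    thus ?thesis by blast
  qed
  have "(\<Sum>F\<in>MA \<union> MK ` NK. int (card_star n (F \<inter> Y))) =
        (\<Sum>F\<in>MA. int (card_star n (F \<inter> Y))) + (\<Sum>F\<in>MK ` NK. int (card_star n (F \<inter> Y)))"
    by (rule sum.union_disjoint) (use finMA finNK disj in auto)
  moreover have "(\<Sum>F\<in>MK ` NK. int (card_star n (F \<inter> Y))) = (\<Sum>K\<in>NK. int (card_star n (MK K \<inter> Y)))"
    using sum.reindex[OF MK_inj] by simp
  moreover have "delta n (restr B Y) = int (card Y) - (\<Sum>F\<in>MA \<union> MK ` NK. int (card_star n (F \<inter> Y)))"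
    using delta_formula[OF linB, of Y] YU unfolding MB_B by simp
  ultimately show ?thesis by simp
qed

lemma aux_key:
  fixes a c e m :: nat
  assumes "c \<le> a" "c \<le> m"
  shows "int ((c + e) - m) \<le> int ((a + e) - m) - int (a - m)"
  using assms by arith

lemma keyD:
  assumes YU: "Y \<subseteq> U"
  shows "delta n (restr Bh Y) - delta n (restr Bh (Y \<inter> UA)) \<le> delta n (restr B Y) - delta n (restr B (Y \<inter> UA))"
proof -
  let ?YA = "Y \<inter> UA"
  have YAU: "?YA \<subseteq> U" using YU by blast
  have fY: "finite Y" using YU finU finite_subset by blast
  have cY: "int (card Y) = int (card ?YA) + int (card (Y - UA))"
  proof -
    have "card Y = card (?YA \<union> (Y - UA))" by (metis Int_Diff_Un)
    also have "\<dots> = card ?YA + card (Y - UA)" by (rule card_Un_disjoint) (use fY in auto)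
    finally show ?thesis by simp
  qed
  have z1: "(\<Sum>K\<in>NK. int (card_star n (MK K \<inter> ?YA))) = 0"
  proof (rule sum.neutral, rule ballI)
    fix K assume K: "K \<in> NK"
    have KB: "K \<in> MB" using K NK_MB by blast
    have "MK K \<inter> ?YA \<subseteq> CK K" using MK_UA[OF KB] by blast
    hence "card (MK K \<inter> ?YA) \<le> card (CK K)" using CK_fin[OF KB] by (rule card_mono[rotated])
    hence "card (MK K \<inter> ?YA) < n" using CK_le[OF KB] n2 by linarith
    thus "int (card_star n (MK K \<inter> ?YA)) = 0" by (simp add: cs_zero)
  qed
  have fa: "(\<Sum>F\<in>MA. int (card_star n (F \<inter> ?YA))) = (\<Sum>F\<in>MA. int (card_star n (F \<inter> Y)))"
  proof (rule sum.cong[OF refl])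
    fix F assume "F \<in> MA"
    hence "F \<inter> ?YA = F \<inter> Y" using MA_props(3) by blast
    thus "int (card_star n (F \<inter> ?YA)) = int (card_star n (F \<inter> Y))" by simp
  qed
  have Bdiff: "delta n (restr B Y) - delta n (restr B ?YA) = int (card Y) - int (card ?YA)
       - (\<Sum>K\<in>NK. int (card_star n (MK K \<inter> Y)))"
    unfolding DB_formula[OF YU] DB_formula[OF YAU] z1 fa by simp
  have Bhdiff: "delta n (restr Bh Y) - delta n (restr Bh ?YA) = int (card Y) - int (card ?YA)
       - (\<Sum>K\<in>MB. int (card_star n (K \<inter> Y)) - int (card_star n (K \<inter> ?YA)))"
    unfolding delta_formula[OF linBh YU] delta_formula[OF linBh YAU] sum_subtractf by simp
  have "(\<Sum>K\<in>MB. int (card_star n (K \<inter> Y)) - int (card_star n (K \<inter> ?YA)))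
      = (\<Sum>K\<in>NK. int (card_star n (K \<inter> Y)) - int (card_star n (K \<inter> ?YA)))"
  proof (rule sum.mono_neutral_right[OF finMB])
    show "NK \<subseteq> MB" unfolding NK_def by blast
    show "\<forall>i\<in>MB - NK. int (card_star n (i \<inter> Y)) - int (card_star n (i \<inter> ?YA)) = 0"
    proof
      fix K assume "K \<in> MB - NK"
      hence "K \<subseteq> UA" unfolding NK_def by blast
      hence "K \<inter> Y = K \<inter> ?YA" by blast
      thus "int (card_star n (K \<inter> Y)) - int (card_star n (K \<inter> ?YA)) = 0" by simp
    qed
  qed
  moreover have "(\<Sum>K\<in>NK. int (card_star n (MK K \<inter> Y))) \<le>
      (\<Sum>K\<in>NK. int (card_star n (K \<inter> Y)) - int (card_star n (K \<inter> ?YA)))"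
  proof (rule sum_mono)
    fix K assume K: "K \<in> NK"
    have KB: "K \<in> MB" using K NK_MB by blast
    have fK: "finite K" using MB_props(1)[OF KB] .
    have C: "CK K \<subseteq> K \<inter> UA" using CK_props(1)[OF KB] .
    have e1: "card (MK K \<inter> Y) = card (CK K \<inter> Y) + card ((K - UA) \<inter> Y)"
    proof -
      have "MK K \<inter> Y = (CK K \<inter> Y) \<union> ((K - UA) \<inter> Y)" unfolding MK_def by blast
      moreover have "card ((CK K \<inter> Y) \<union> ((K - UA) \<inter> Y)) = card (CK K \<inter> Y) + card ((K - UA) \<inter> Y)"
        by (rule card_Un_disjoint) (use fK C finite_subset in auto)
      ultimately show ?thesis by simp
    qed
    have e2: "card (K \<inter> Y) = card (K \<inter> ?YA) + card ((K - UA) \<inter> Y)"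
    proof -
      have "K \<inter> Y = (K \<inter> ?YA) \<union> ((K - UA) \<inter> Y)" by blast
      moreover have "card ((K \<inter> ?YA) \<union> ((K - UA) \<inter> Y)) = card (K \<inter> ?YA) + card ((K - UA) \<inter> Y)"
        by (rule card_Un_disjoint) (use fK in auto)
      ultimately show ?thesis by simp
    qed
    have ca: "card (CK K \<inter> Y) \<le> card (K \<inter> ?YA)" using C fK by (intro card_mono) auto
    have cm: "card (CK K \<inter> Y) \<le> n - 1"
      using card_mono[OF CK_fin[OF KB], of "CK K \<inter> Y"] CK_le[OF KB] by auto
    show "int (card_star n (MK K \<inter> Y)) \<le> int (card_star n (K \<inter> Y)) - int (card_star n (K \<inter> ?YA))"
      unfolding card_star_def e1 e2 by (rule aux_key[OF ca cm])
  qed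
  ultimately show ?thesis using Bdiff Bhdiff by linarith
qed

lemma H:
  assumes YU: "Y \<subseteq> U" and c: "card Y \<ge> n - 1"
  shows "delta n (restr Bh Y) \<ge> int n - 1"
proof (cases "card Y < n")
  case True
  thus ?thesis using delta_small[OF linBh YU True] c by linarith
next
  case False
  show ?thesis
  proof (rule ccontr)
    assume na: "\<not> delta n (restr Bh Y) \<ge> int n - 1"
    hence "delta n (restr Bh Y) < int n" by linarith
    moreover have "finite Y" using YU finU finite_subset by blast
    ultimately obtain K where K: "K \<in> MB" "Y \<subseteq> K" using geomD[OF YU] False by auto
    have "delta n (restr Bh Y) = int n - 1" using delta_in_clique[OF linBh K c] n2 by simp
    thus False using na by simp
  qed
qed

lemma DBh_le_DB:
  assumes YU: "Y \<subseteq> U"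
  shows "delta n (restr Bh Y) \<le> delta n (restr B Y)"
proof -
  have "delta n (restr Bh (Y \<inter> UA)) \<le> delta n (restr A (Y \<inter> UA))" by (rule E) blast
  moreover have "delta n (restr B (Y \<inter> UA)) = delta n (restr A (Y \<inter> UA))" by (rule DB_A) blast
  ultimately show ?thesis using keyD[OF YU] by linarith
qed

lemma P:
  assumes YU: "Y \<subseteq> U" and c: "card Y \<ge> n - 1"
  shows "delta n (restr B Y) \<ge> int n - 1"
  using H[OF YU c] DBh_le_DB[OF YU] by linarith

end



context cstr begin

lemma gdimB_C:
  assumes CU: "C \<subseteq> U" and cC: "card C = n - 1"
  shows "gdim n B C = int n - 1"
proof (rule antisym)
  have fC: "finite C" using CU finU finite_subset by blast
  have "card C < n" using cC n2 by simp
  hence "delta n (restr B C) = int (card C)" using delta_small[OF linB] CU by simp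
  moreover have "gdim n B C \<le> delta n (restr B C)" using gdim_le[of B C C] finU CU by simp
  ultimately show "gdim n B C \<le> int n - 1" using cC n2 by simp
  show "int n - 1 \<le> gdim n B C"
  proof (rule gdim_ge)
    show "finite (univ B)" using finU by simp
    show "C \<subseteq> univ B" using CU by simp
    fix Y assume Y: "C \<subseteq> Y" "Y \<subseteq> univ B"
    hence YU: "Y \<subseteq> U" by simp
    have "card C \<le> card Y" using Y YU finU finite_subset by (metis card_mono)
    thus "int n - 1 \<le> delta n (restr B Y)" using P[OF YU] cC by simp
  qed
qed

lemma gdimB_le_A:
  assumes XA: "X \<subseteq> UA"
  shows "gdim n B X \<le> gdim n A X"
proof -
  obtain Y where Y: "X \<subseteq> Y" "Y \<subseteq> UA" "gdim n A X = delta n (restr A Y)"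
    using gdim_attain[OF finUA XA] by blast
  have "gdim n B X \<le> delta n (restr B Y)" using gdim_le[of B X Y] finU Y UA_sub by simp
  thus ?thesis using Y DB_A[OF Y(2)] by simp
qed

lemma J:
  assumes XA: "X \<subseteq> UA" and cX: "n \<le> card X"
    and hS: "\<And>S. S \<subseteq> X \<Longrightarrow> finite S \<Longrightarrow> card S = n \<Longrightarrow> S \<in> rel (Ggeo n A)"
  shows "gdim n A X \<le> int n - 1"
proof -
  have fX: "finite X" using XA finUA finite_subset by blast
  have "n - 1 \<le> card X" using cX by simp
  then obtain C0 where C0: "C0 \<subseteq> X" "card C0 = n - 1" "finite C0" by (rule obtain_subset_with_card_n)
  have C0A: "C0 \<subseteq> UA" using C0 XA by blast
  have gC0: "gdim n A C0 = int n - 1" using gdimA_C[OF C0A C0(2)] .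
  have pair: "gdim n A (insert a C0) \<le> int n - 1" if a: "a \<in> X - C0" for a
  proof -
    let ?S = "insert a C0"
    have cS: "card ?S = n" using a C0 n2 by simp
    have "?S \<in> rel (Ggeo n A)" using hS[of ?S] a C0 cS by blast
    then obtain C' where C': "C' \<subseteq> UA" "finite C'" "card C' = n - 1" "?S \<subseteq> gcl n A C'"
      unfolding rel_Ggeo by blast
    have fS: "finite ?S" using C0 by simp
    have "gdim n A (C' \<union> ?S) = gdim n A C'" using gdim_cl[OF linA C'(1) fS C'(4)] .
    moreover have "gdim n A C' = int n - 1" using gdimA_C[OF C'(1,3)] .
    moreover have "gdim n A ?S \<le> gdim n A (C' \<union> ?S)"
      using C'(1) C0A a XA by (intro gdim_mono[OF finUA]) auto
    ultimately show ?thesis by simp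
  qed
  have ind: "finite T \<Longrightarrow> T \<subseteq> X - C0 \<Longrightarrow> gdim n A (C0 \<union> T) \<le> int n - 1" for T
  proof (induction T rule: finite_induct)
    case empty thus ?case using gC0 by simp
  next
    case (insert a T)
    have aX: "a \<in> X - C0" using insert by blast
    have sub: "C0 \<union> T \<subseteq> UA" "insert a C0 \<subseteq> UA" using insert C0A XA by auto
    have eq1: "(C0 \<union> T) \<union> insert a C0 = C0 \<union> insert a T" by blast
    have eq2: "(C0 \<union> T) \<inter> insert a C0 = C0" using insert aX by blast
    have "gdim n A (C0 \<union> insert a T) + gdim n A C0 \<le> gdim n A (C0 \<union> T) + gdim n A (insert a C0)"
      using gdim_submod[OF linA sub] unfolding eq1 eq2 .
    thus ?case using insert pair[OF aX] gC0 by simp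
  qed
  have "X = C0 \<union> (X - C0)" using C0 by blast
  thus ?thesis using ind[of "X - C0"] fX by simp
qed

lemma J_MB:
  assumes K: "K \<in> MB" and c: "n \<le> card (K \<inter> UA)"
  shows "gdim n A (K \<inter> UA) \<le> int n - 1"
proof (rule J)
  show "K \<inter> UA \<subseteq> UA" by blast
  show "n \<le> card (K \<inter> UA)" by (rule c)
  fix S assume S: "S \<subseteq> K \<inter> UA" "finite S" "card S = n"
  have "S \<in> rel Bh" using clique_sub_rel[OF MB_props(4)[OF K] _ S(2,3)] S(1) by blast
  thus "S \<in> rel (Ggeo n A)" unfolding relGgeo_eq using S(1) by blast
qed

lemma GK:
  assumes K: "K \<in> MB"
  shows "gdim n B K \<le> int n - 1"
proof (cases "K \<in> NK")
  case False
  hence KA: "K \<subseteq> UA" using K unfolding NK_def by blast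
  hence "K \<inter> UA = K" by blast
  hence "gdim n A K \<le> int n - 1" using J_MB[OF K] MB_props(2)[OF K] by simp
  thus ?thesis using gdimB_le_A[OF KA] by simp
next
  case True
  let ?KA = "K \<inter> UA"
  have fK: "finite K" using MB_props(1)[OF K] .
  have KU: "K \<subseteq> U" using MB_props(3)[OF K] .
  have gKA: "gdim n B ?KA \<le> int n - 1"
  proof (cases "n \<le> card ?KA")
    case True
    thus ?thesis using J_MB[OF K True] gdimB_le_A[of ?KA] by fastforce
  next
    case False
    have "gdim n B ?KA \<le> delta n (restr B ?KA)" using gdim_le[of B ?KA ?KA] finU KU by auto
    also have "\<dots> \<le> int (card ?KA)"
    proof -
      have "?KA \<subseteq> univ B" using KU by auto
      thus ?thesis by (rule delta_le_card[OF linB])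
    qed
    finally show ?thesis using False by linarith
  qed
  have MKB: "MK K \<in> maxcliques n B" unfolding MB_B using True by blast
  have MKU: "MK K \<subseteq> U" using MK_sub[OF K] KU by blast
  have gM: "gdim n B (MK K) \<le> int n - 1"
  proof -
    have "gdim n B (MK K) \<le> delta n (restr B (MK K))" using gdim_le[of B "MK K" "MK K"] finU MKU by auto
    moreover have "delta n (restr B (MK K)) = int n - 1"
      using delta_in_clique[OF linB MKB subset_refl] MK_card[OF True] n2 by simp
    ultimately show ?thesis by simp
  qed
  have sub: "?KA \<subseteq> univ B" "MK K \<subseteq> univ B" using KU MKU by auto
  have eq1: "?KA \<union> MK K = K" using CK_props(1)[OF K] unfolding MK_def by blast
  have eq2: "?KA \<inter> MK K = CK K" using CK_props(1)[OF K] unfolding MK_def by blast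
  have sm: "gdim n B K + gdim n B (CK K) \<le> gdim n B ?KA + gdim n B (MK K)"
    using gdim_submod[OF linB sub] unfolding eq1 eq2 .
  show ?thesis
  proof (cases "card ?KA < n - 1")
    case True
    hence "CK K = ?KA" using CK_full[OF K] by simp
    thus ?thesis using sm gM by simp
  next
    case False
    hence "card (CK K) = n - 1" using CK_props(2)[OF K] by simp
    hence "gdim n B (CK K) = int n - 1" using gdimB_C CK_props(1)[OF K] KU by blast
    thus ?thesis using sm gM gKA by simp
  qed
qed

lemma Bh_rel_clique:
  assumes "S \<in> rel Bh"
  shows "clique n Bh S"
proof -
  have S: "S \<subseteq> U" "finite S" "card S = n" using relBh_sub[OF assms] by auto
  have "F \<in> rel Bh" if "F \<subseteq> S" "card F = n" for F
    using that S assms card_subset_eq[OF S(2)] by metis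
  thus ?thesis unfolding clique_def using S by blast
qed

theorem result: "C_clq n B \<and> strong n A B \<and> pure n B (n - 1) \<and> Ggeo n B = Bh"
proof (intro conjI)
  show "C_clq n B"
    unfolding C_clq_def C_clq0_def
  proof (intro conjI ballI impI)
    show "wf_struc n B" by (rule wfB)
    show "finite (univ B)" using finU by simp
    show "card (K1 \<inter> K2) < n" if "K1 \<in> maxcliques n B" "K2 \<in> maxcliques n B" "K1 \<noteq> K2" for K1 K2
      using linB that unfolding lin_def by blast
    fix a assume a: "a \<in> univ B"
    have aU: "{a} \<subseteq> U" using a by simp
    have d1: "delta n (restr B {a}) = 1" using delta_small[OF linB, of "{a}"] aU n2 by simp
    have "0 \<le> delta n (restr B X) - delta n (restr B (univ (restr B {a})))"
      if X: "finite X" "univ (restr B {a}) \<subseteq> X" "X \<subseteq> univ B" for X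
    proof -
      have XU: "X \<subseteq> U" "a \<in> X" using X by auto
      have "delta n (restr B X) \<ge> 1"
      proof (cases "card X \<ge> n - 1")
        case True thus ?thesis using P[OF XU(1) True] n2 by linarith
      next
        case False
        hence "card X < n" by simp
        hence "delta n (restr B X) = int (card X)" using delta_small[OF linB] XU by simp
        moreover have "card X \<ge> 1" using X(1) XU(2) by (metis One_nat_def Suc_leI card_gt_0_iff empty_iff)
        ultimately show ?thesis by simp
      qed
      thus ?thesis using d1 by simp
    qed
    moreover have "substruc (restr B {a}) B" unfolding substruc_def using aU by simp
    ultimately show "strong n (restr B {a}) B" unfolding strong_def by simp
  qed
  show "strong n A B"
  proof -
    have "rel A = {S \<in> rel A. S \<subseteq> UA}" using relA_sub by blast
    also have "\<dots> = {S \<in> relB. S \<subseteq> UA}" using relB_restrA[OF subset_refl] by simp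
    finally have sA: "substruc A B" unfolding substruc_def using UA_sub by simp
    have "0 \<le> delta n (restr B X) - delta n (restr B UA)" if X: "finite X" "UA \<subseteq> X" "X \<subseteq> univ B" for X
    proof -
      have XU: "X \<subseteq> U" and XA: "X \<inter> UA = UA" using X by auto
      have "delta n (restr Bh UA) \<le> delta n (restr Bh X)" using strB_cond X by simp
      thus ?thesis using keyD[OF XU] unfolding XA by linarith
    qed
    thus ?thesis unfolding strong_def using sA finUA by auto
  qed
  show "pure n B (n - 1)"
    unfolding pure_def
  proof (intro conjI allI impI)
    fix X assume X: "X \<subseteq> univ B" "finite X \<and> card X = n - 1"
    thus "gindep n B X" unfolding gindep_def using gdimB_C[of X] n2 by simp
  next
    obtain X where X: "X \<subseteq> UA" "finite X" "card X = n - 1 + 1" "\<not> gindep n A X"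
      using pureA unfolding pure_def by blast
    have "gdim n A X \<le> delta n (restr A X)" using gdim_le[OF finUA subset_refl X(1)] .
    moreover have "delta n (restr A X) \<le> int (card X)" using delta_le_card[OF linA X(1)] .
    moreover have "gdim n A X \<noteq> int (card X)" using X(2,4) unfolding gindep_def by simp
    ultimately have "gdim n B X < int (card X)" using gdimB_le_A[OF X(1)] by linarith
    hence "\<not> gindep n B X" unfolding gindep_def by simp
    moreover have "X \<subseteq> univ B" using X(1) UA_sub by simp
    ultimately show "\<exists>X\<subseteq>univ B. finite X \<and> card X = n - 1 + 1 \<and> \<not> gindep n B X" using X(2,3) by blast
  qed
  show "Ggeo n B = Bh"
  proof -
    have "snd (Ggeo n B) = rel Bh"
    proof (intro set_eqI iffI)
      fix S assume "S \<in> snd (Ggeo n B)"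
      then obtain C where S: "S \<subseteq> U" "finite S" "card S = n" and C: "C \<subseteq> U" "finite C" "card C = n - 1"
        "S \<subseteq> gcl n B C"
        unfolding Ggeo_def geo_of_def by auto
      have "gdim n B (C \<union> S) = gdim n B C" using gdim_cl[OF linB] C S by simp
      hence g: "gdim n B (C \<union> S) = int n - 1" using gdimB_C[OF C(1,3)] by simp
      obtain Y where Y: "C \<union> S \<subseteq> Y" "Y \<subseteq> U" "gdim n B (C \<union> S) = delta n (restr B Y)"
      proof -
        have "C \<union> S \<subseteq> univ B" using C S by simp
        from gdim_attain[OF _ this, of n] finU show ?thesis using that by auto
      qed
      have "delta n (restr Bh Y) < int n" using DBh_le_DB[OF Y(2)] Y(3) g by simp
      moreover have fY: "finite Y" using Y(2) finU finite_subset by blast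
      moreover have "n \<le> card Y" using card_mono[OF fY, of S] Y(1) S(3) by simp
      ultimately obtain K where K: "K \<in> MB" "Y \<subseteq> K" using geomD[OF Y(2)] by blast
      show "S \<in> rel Bh" using clique_sub_rel[OF MB_props(4)[OF K(1)] _ S(2,3)] K Y by blast
    next
      fix S assume SR: "S \<in> rel Bh"
      have S: "S \<subseteq> U" "finite S" "card S = n" using relBh_sub[OF SR] by auto
      obtain K where K: "K \<in> MB" "S \<subseteq> K" using clique_max[OF finU Bh_rel_clique[OF SR]] by blast
      have "S \<noteq> {}" using S n2 by auto
      then obtain s where s: "s \<in> S" by blast
      let ?C = "S - {s}"
      have cC: "card ?C = n - 1" using S s by simp
      have CU: "?C \<subseteq> U" using S by blast
      have gC: "gdim n B ?C = int n - 1" using gdimB_C[OF CU cC] .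
      have KU: "K \<subseteq> U" using MB_props(3)[OF K(1)] .
      have Kcl: "K \<subseteq> gcl n B ?C"
      proof
        fix x assume x: "x \<in> K"
        have "gdim n B ?C \<le> gdim n B (insert x ?C)" using x KU CU finU by (intro gdim_mono) auto
        moreover have "gdim n B (insert x ?C) \<le> gdim n B K" using x KU K(2) finU by (intro gdim_mono) auto
        ultimately have "gdim n B (insert x ?C) = gdim n B ?C" using GK[OF K(1)] gC by linarith
        moreover have "x \<in> univ B" using x KU by auto
        ultimately show "x \<in> gcl n B ?C" unfolding gcl_def by blast
      qed
      have ne: "gcl n B ?C \<noteq> ?C" using Kcl K(2) s by blast
      have "finite ?C" using S by simp
      hence "?C \<subseteq> U \<and> finite ?C \<and> card ?C = n - 1 \<and> gcl n B ?C \<noteq> ?C \<and> S \<subseteq> gcl n B ?C"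
        using CU cC ne Kcl K(2) by blast
      hence ex: "\<exists>C\<subseteq>U. finite C \<and> card C = n - 1 \<and> gcl n B C \<noteq> C \<and> S \<subseteq> gcl n B C" by blast
      show "S \<in> snd (Ggeo n B)" unfolding Ggeo_def geo_of_def snd_conv univB using S ex by blast
    qed
    moreover have "fst (Ggeo n B) = U" by (simp add: Ggeo_def geo_of_def)
    ultimately show ?thesis unfolding univ_def rel_def by (metis prod.collapse)
  qed
qed

end


theorem mainTheorem4:
  fixes n :: nat and A Bh :: "'a struc"
  assumes "n \<ge> 2"
    and "C_clq n A"
    and "pure n A (n - 1)"
    and "C_geo n Bh"
    and "strong n (Ggeo n A) Bh"
  shows "\<exists>B. C_clq n B \<and> strong n A B \<and> pure n B (n - 1) \<and> Ggeo n B = Bh"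
proof -
  interpret cstr n A Bh using assms by unfold_locales
  show ?thesis using result by blast
qed

end
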